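(* Let $G$ be a finitely generated torsion-free nilpotent group and suppose the decomposition $\overline{G}=R_1\times R_2$ into rational subgroups matches the decomposition $G=G_1\times G_2$. Let $X_i=R_iZ(\overline{G})\cap G$ for $i=1,2$. Then $X_i=G_iZ(G)$ for $i=1,2$.
   Context: $\overline{G}$ is the rational closure of $G$ (torsion-free nilpotent, containing $G$, uniquely divisible, each element has a positive power in $G$); for $H\le G$, $\overline{H}$ is the set of elements of $\overline{G}$ having a positive power in $H$. A subgroup is rational if closed under taking all $n$-th roots. A decomposition $\overline{G}=R_1\times R_2$ matches $G=G_1\times G_2$ if $\overline{G_i}\,Z(\overline{G})=R_i\,Z(\overline{G})$ for $i=1,2$. *)

theory Defs
  imports "HOL-Algebra.Algebra"
begin

definition center :: "('a, 'b) monoid_scheme \<Rightarrow> 'a set" where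
  "center G = {z \<in> carrier G. \<forall>g \<in> carrier G. z \<otimes>\<^bsub>G\<^esub> g = g \<otimes>\<^bsub>G\<^esub> z}"

text \<open>Lower central series: gamma_1 = G (index 0 here), gamma_(k+1) = [gamma_k, G].\<close>
fun lower_central :: "('a, 'b) monoid_scheme \<Rightarrow> nat \<Rightarrow> 'a set" where
  "lower_central G 0 = carrier G"
| "lower_central G (Suc k) = generate G
     {x \<otimes>\<^bsub>G\<^esub> y \<otimes>\<^bsub>G\<^esub> inv\<^bsub>G\<^esub> x \<otimes>\<^bsub>G\<^esub> inv\<^bsub>G\<^esub> y | x y.
        x \<in> lower_central G k \<and> y \<in> carrier G}"

definition nilpotent_group :: "('a, 'b) monoid_scheme \<Rightarrow> bool" where
  "nilpotent_group G \<longleftrightarrow> group G \<and> (\<exists>k. lower_central G k = {\<one>\<^bsub>G\<^esub>})"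

definition finitely_generated_group :: "('a, 'b) monoid_scheme \<Rightarrow> bool" where
  "finitely_generated_group G \<longleftrightarrow>
     (\<exists>S. finite S \<and> S \<subseteq> carrier G \<and> generate G S = carrier G)"

definition torsion_free :: "('a, 'b) monoid_scheme \<Rightarrow> bool" where
  "torsion_free G \<longleftrightarrow>
     (\<forall>x \<in> carrier G. \<forall>n::nat. n > 0 \<longrightarrow> x [^]\<^bsub>G\<^esub> n = \<one>\<^bsub>G\<^esub> \<longrightarrow> x = \<one>\<^bsub>G\<^esub>)"

definition uniquely_divisible :: "('a, 'b) monoid_scheme \<Rightarrow> bool" where
  "uniquely_divisible G \<longleftrightarrow>
     (\<forall>x \<in> carrier G. \<forall>n::nat. n > 0 \<longrightarrow> (\<exists>!y. y \<in> carrier G \<and> y [^]\<^bsub>G\<^esub> n = x))"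

definition rational_closure_of :: "('a, 'b) monoid_scheme \<Rightarrow> 'a set \<Rightarrow> bool" where
  "rational_closure_of Gb G \<longleftrightarrow>
     group Gb \<and> nilpotent_group Gb \<and> torsion_free Gb \<and> uniquely_divisible Gb \<and>
     subgroup G Gb \<and>
     (\<forall>x \<in> carrier Gb. \<exists>n::nat. n > 0 \<and> x [^]\<^bsub>Gb\<^esub> n \<in> G)"

definition rat_closure_set :: "('a, 'b) monoid_scheme \<Rightarrow> 'a set \<Rightarrow> 'a set" where
  "rat_closure_set Gb H = {x \<in> carrier Gb. \<exists>n::nat. n > 0 \<and> x [^]\<^bsub>Gb\<^esub> n \<in> H}"

definition rational_subgroup :: "'a set \<Rightarrow> ('a, 'b) monoid_scheme \<Rightarrow> bool" where
  "rational_subgroup R G \<longleftrightarrow> subgroup R G \<and>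
     (\<forall>x \<in> carrier G. \<forall>n::nat. n > 0 \<longrightarrow> x [^]\<^bsub>G\<^esub> n \<in> R \<longrightarrow> x \<in> R)"

definition internal_direct_product :: "('a, 'b) monoid_scheme \<Rightarrow> 'a set \<Rightarrow> 'a set \<Rightarrow> bool" where
  "internal_direct_product H A B \<longleftrightarrow>
     A \<lhd> H \<and> B \<lhd> H \<and> A \<inter> B = {\<one>\<^bsub>H\<^esub>} \<and> A <#>\<^bsub>H\<^esub> B = carrier H"

end

theory Submission
  imports Defs
begin

lemma conj_pow:
  assumes "group Gb" "x \<in> carrier Gb" "y \<in> carrier Gb"
  shows "(y \<otimes>\<^bsub>Gb\<^esub> x \<otimes>\<^bsub>Gb\<^esub> inv\<^bsub>Gb\<^esub> y) [^]\<^bsub>Gb\<^esub> (n::nat)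
       = y \<otimes>\<^bsub>Gb\<^esub> x [^]\<^bsub>Gb\<^esub> n \<otimes>\<^bsub>Gb\<^esub> inv\<^bsub>Gb\<^esub> y"
proof -
  interpret group Gb by fact
  have cancel: "\<And>z. z \<in> carrier Gb \<Longrightarrow> z \<otimes>\<^bsub>Gb\<^esub> inv\<^bsub>Gb\<^esub> y \<otimes>\<^bsub>Gb\<^esub> y = z"
    using assms by (simp add: m_assoc)
  have ic: "\<And>z. z \<in> carrier Gb \<Longrightarrow> inv\<^bsub>Gb\<^esub> y \<otimes>\<^bsub>Gb\<^esub> (y \<otimes>\<^bsub>Gb\<^esub> z) = z"
    using assms by (simp add: m_assoc[symmetric])
  show ?thesis
  proof (induction n)
    case 0 then show ?case using assms by simp
  next
    case (Suc n)
    have "(y \<otimes>\<^bsub>Gb\<^esub> x \<otimes>\<^bsub>Gb\<^esub> inv\<^bsub>Gb\<^esub> y) [^]\<^bsub>Gb\<^esub> Suc n = (y \<otimes>\<^bsub>Gb\<^esub> x [^]\<^bsub>Gb\<^esub> n \<otimes>\<^bsub>Gb\<^esub> inv\<^bsub>Gb\<^esub> y) \<otimes>\<^bsub>Gb\<^esub> (y \<otimes>\<^bsub>Gb\<^esub> x \<otimes>\<^bsub>Gb\<^esub> inv\<^bsub>Gb\<^esub> y)"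
      using Suc by simp
    also have "\<dots> = y \<otimes>\<^bsub>Gb\<^esub> x [^]\<^bsub>Gb\<^esub> n \<otimes>\<^bsub>Gb\<^esub> inv\<^bsub>Gb\<^esub> y \<otimes>\<^bsub>Gb\<^esub> y \<otimes>\<^bsub>Gb\<^esub> x \<otimes>\<^bsub>Gb\<^esub> inv\<^bsub>Gb\<^esub> y"
      using assms by (simp add: m_assoc ic)
    also have "\<dots> = y \<otimes>\<^bsub>Gb\<^esub> x [^]\<^bsub>Gb\<^esub> n \<otimes>\<^bsub>Gb\<^esub> x \<otimes>\<^bsub>Gb\<^esub> inv\<^bsub>Gb\<^esub> y"
      using assms cancel[of "y \<otimes>\<^bsub>Gb\<^esub> x [^]\<^bsub>Gb\<^esub> n"] by simp
    also have "\<dots> = y \<otimes>\<^bsub>Gb\<^esub> x [^]\<^bsub>Gb\<^esub> Suc n \<otimes>\<^bsub>Gb\<^esub> inv\<^bsub>Gb\<^esub> y"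
      using assms by (simp add: m_assoc nat_pow_Suc)
    finally show ?case .
  qed
qed

lemma root_comm:
  assumes "group Gb" "uniquely_divisible Gb" "x \<in> carrier Gb" "y \<in> carrier Gb" "(n::nat) > 0"
    and c: "x [^]\<^bsub>Gb\<^esub> n \<otimes>\<^bsub>Gb\<^esub> y = y \<otimes>\<^bsub>Gb\<^esub> x [^]\<^bsub>Gb\<^esub> n"
  shows "x \<otimes>\<^bsub>Gb\<^esub> y = y \<otimes>\<^bsub>Gb\<^esub> x"
proof -
  interpret group Gb by fact
  let ?w = "y \<otimes>\<^bsub>Gb\<^esub> x \<otimes>\<^bsub>Gb\<^esub> inv\<^bsub>Gb\<^esub> y"
  have wc: "?w \<in> carrier Gb" using assms(3,4) by simp
  have "?w [^]\<^bsub>Gb\<^esub> n = y \<otimes>\<^bsub>Gb\<^esub> x [^]\<^bsub>Gb\<^esub> n \<otimes>\<^bsub>Gb\<^esub> inv\<^bsub>Gb\<^esub> y"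
    by (rule conj_pow[OF assms(1,3,4)])
  also have "\<dots> = x [^]\<^bsub>Gb\<^esub> n \<otimes>\<^bsub>Gb\<^esub> y \<otimes>\<^bsub>Gb\<^esub> inv\<^bsub>Gb\<^esub> y"
    by (rule arg_cong[OF c, of "\<lambda>t. t \<otimes>\<^bsub>Gb\<^esub> inv\<^bsub>Gb\<^esub> y", symmetric])
  also have "\<dots> = x [^]\<^bsub>Gb\<^esub> n" using assms(3,4) by (simp add: m_assoc)
  finally have w: "?w [^]\<^bsub>Gb\<^esub> n = x [^]\<^bsub>Gb\<^esub> n" .
  have "\<exists>!z. z \<in> carrier Gb \<and> z [^]\<^bsub>Gb\<^esub> n = x [^]\<^bsub>Gb\<^esub> n"
    using assms(2,3,5) unfolding uniquely_divisible_def by simp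
  then have u: "\<And>z1 z2. z1 \<in> carrier Gb \<Longrightarrow> z1 [^]\<^bsub>Gb\<^esub> n = x [^]\<^bsub>Gb\<^esub> n \<Longrightarrow>
      z2 \<in> carrier Gb \<Longrightarrow> z2 [^]\<^bsub>Gb\<^esub> n = x [^]\<^bsub>Gb\<^esub> n \<Longrightarrow> z1 = z2" by blast
  have wx: "?w = x" by (rule u[OF wc w assms(3) refl])
  have "y \<otimes>\<^bsub>Gb\<^esub> x = ?w \<otimes>\<^bsub>Gb\<^esub> y" using assms(3,4) by (simp add: m_assoc)
  also have "\<dots> = x \<otimes>\<^bsub>Gb\<^esub> y" using wx by simp
  finally show ?thesis by (rule sym)
qed

lemma comm_mult:
  assumes "group Gb" "a \<in> carrier Gb" "b \<in> carrier Gb" "c \<in> carrier Gb"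
    "a \<otimes>\<^bsub>Gb\<^esub> c = c \<otimes>\<^bsub>Gb\<^esub> a" "b \<otimes>\<^bsub>Gb\<^esub> c = c \<otimes>\<^bsub>Gb\<^esub> b"
  shows "(a \<otimes>\<^bsub>Gb\<^esub> b) \<otimes>\<^bsub>Gb\<^esub> c = c \<otimes>\<^bsub>Gb\<^esub> (a \<otimes>\<^bsub>Gb\<^esub> b)"
proof -
  interpret group Gb by fact
  have "(a \<otimes>\<^bsub>Gb\<^esub> b) \<otimes>\<^bsub>Gb\<^esub> c = a \<otimes>\<^bsub>Gb\<^esub> (b \<otimes>\<^bsub>Gb\<^esub> c)" using assms(2-4) by (simp add: m_assoc)
  also have "\<dots> = a \<otimes>\<^bsub>Gb\<^esub> (c \<otimes>\<^bsub>Gb\<^esub> b)" by (rule arg_cong[OF assms(6), of "\<lambda>t. a \<otimes>\<^bsub>Gb\<^esub> t"])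
  also have "\<dots> = (a \<otimes>\<^bsub>Gb\<^esub> c) \<otimes>\<^bsub>Gb\<^esub> b" using assms(2-4) by (simp add: m_assoc)
  also have "\<dots> = (c \<otimes>\<^bsub>Gb\<^esub> a) \<otimes>\<^bsub>Gb\<^esub> b" by (rule arg_cong[OF assms(5), of "\<lambda>t. t \<otimes>\<^bsub>Gb\<^esub> b"])
  also have "\<dots> = c \<otimes>\<^bsub>Gb\<^esub> (a \<otimes>\<^bsub>Gb\<^esub> b)" using assms(2-4) by (simp add: m_assoc)
  finally show ?thesis .
qed

lemma comm_inv:
  assumes "group Gb" "a \<in> carrier Gb" "c \<in> carrier Gb"
    "a \<otimes>\<^bsub>Gb\<^esub> c = c \<otimes>\<^bsub>Gb\<^esub> a"
  shows "inv\<^bsub>Gb\<^esub> a \<otimes>\<^bsub>Gb\<^esub> c = c \<otimes>\<^bsub>Gb\<^esub> inv\<^bsub>Gb\<^esub> a"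
proof -
  interpret group Gb by fact
  have "inv\<^bsub>Gb\<^esub> a \<otimes>\<^bsub>Gb\<^esub> c = inv\<^bsub>Gb\<^esub> a \<otimes>\<^bsub>Gb\<^esub> (c \<otimes>\<^bsub>Gb\<^esub> (a \<otimes>\<^bsub>Gb\<^esub> inv\<^bsub>Gb\<^esub> a))" using assms(2,3) by simp
  also have "\<dots> = inv\<^bsub>Gb\<^esub> a \<otimes>\<^bsub>Gb\<^esub> (c \<otimes>\<^bsub>Gb\<^esub> a) \<otimes>\<^bsub>Gb\<^esub> inv\<^bsub>Gb\<^esub> a" using assms(2,3) by (simp add: m_assoc)
  also have "\<dots> = inv\<^bsub>Gb\<^esub> a \<otimes>\<^bsub>Gb\<^esub> (a \<otimes>\<^bsub>Gb\<^esub> c) \<otimes>\<^bsub>Gb\<^esub> inv\<^bsub>Gb\<^esub> a" by (rule arg_cong[OF assms(4), of "\<lambda>t. inv\<^bsub>Gb\<^esub> a \<otimes>\<^bsub>Gb\<^esub> t \<otimes>\<^bsub>Gb\<^esub> inv\<^bsub>Gb\<^esub> a", symmetric])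
  also have "\<dots> = (inv\<^bsub>Gb\<^esub> a \<otimes>\<^bsub>Gb\<^esub> a) \<otimes>\<^bsub>Gb\<^esub> c \<otimes>\<^bsub>Gb\<^esub> inv\<^bsub>Gb\<^esub> a" using assms(2,3) by (simp add: m_assoc[symmetric])
  also have "\<dots> = c \<otimes>\<^bsub>Gb\<^esub> inv\<^bsub>Gb\<^esub> a" using assms(2,3) by simp
  finally show ?thesis .
qed

lemma dp_facts:
  assumes "group Gb" "subgroup G Gb"
    and d: "internal_direct_product (Gb\<lparr>carrier := G\<rparr>) A B"
  shows "A \<subseteq> G" "B \<subseteq> G"
    "\<forall>a\<in>A. \<forall>b\<in>B. a \<otimes>\<^bsub>Gb\<^esub> b = b \<otimes>\<^bsub>Gb\<^esub> a"
    "\<forall>g\<in>G. \<exists>a\<in>A. \<exists>b\<in>B. g = a \<otimes>\<^bsub>Gb\<^esub> b"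
    "\<forall>g\<in>G. \<exists>b\<in>B. \<exists>a\<in>A. g = b \<otimes>\<^bsub>Gb\<^esub> a"
proof -
  interpret group Gb by fact
  let ?H = "Gb\<lparr>carrier := G\<rparr>"
  from d have nA: "A \<lhd> ?H" and nB: "B \<lhd> ?H" and AB: "A \<inter> B = {\<one>\<^bsub>Gb\<^esub>}"
    and P: "A <#>\<^bsub>?H\<^esub> B = G"
    unfolding internal_direct_product_def by auto
  interpret nA: normal A ?H by (rule nA)
  interpret nB: normal B ?H by (rule nB)
  have sA: "A \<subseteq> G" using nA.subset by simp
  have sB: "B \<subseteq> G" using nB.subset by simp
  show "A \<subseteq> G" "B \<subseteq> G" by (fact sA, fact sB)
  have G_sub: "G \<subseteq> carrier Gb" using assms(2) subgroup.subset by blast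
  have comm: "a \<otimes>\<^bsub>Gb\<^esub> b = b \<otimes>\<^bsub>Gb\<^esub> a" if a: "a \<in> A" and b: "b \<in> B" for a b
  proof -
    have aG: "a \<in> G" and bG: "b \<in> G" using a b sA sB by auto
    have ac: "a \<in> carrier Gb" and bc: "b \<in> carrier Gb" using aG bG G_sub by auto
    have "a \<otimes>\<^bsub>?H\<^esub> b \<otimes>\<^bsub>?H\<^esub> inv\<^bsub>?H\<^esub> a \<in> B"
      using nB.inv_op_closed2[of a b] aG b by simp
    then have x1: "a \<otimes>\<^bsub>Gb\<^esub> b \<otimes>\<^bsub>Gb\<^esub> inv\<^bsub>Gb\<^esub> a \<in> B" using aG assms(2) by simp
    have "b \<otimes>\<^bsub>?H\<^esub> inv\<^bsub>?H\<^esub> a \<otimes>\<^bsub>?H\<^esub> inv\<^bsub>?H\<^esub> b \<in> A"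
      using nA.inv_op_closed2[of b "inv\<^bsub>?H\<^esub> a"] bG a nA.m_inv_closed by simp
    then have x2: "b \<otimes>\<^bsub>Gb\<^esub> inv\<^bsub>Gb\<^esub> a \<otimes>\<^bsub>Gb\<^esub> inv\<^bsub>Gb\<^esub> b \<in> A" using aG bG assms(2) by simp
    have inB: "a \<otimes>\<^bsub>Gb\<^esub> b \<otimes>\<^bsub>Gb\<^esub> inv\<^bsub>Gb\<^esub> a \<otimes>\<^bsub>Gb\<^esub> inv\<^bsub>Gb\<^esub> b \<in> B"
      using subgroup.m_closed[OF nB.subgroup_axioms x1 subgroup.m_inv_closed[OF nB.subgroup_axioms b]] bG assms(2) by simp
    have inA: "a \<otimes>\<^bsub>Gb\<^esub> (b \<otimes>\<^bsub>Gb\<^esub> inv\<^bsub>Gb\<^esub> a \<otimes>\<^bsub>Gb\<^esub> inv\<^bsub>Gb\<^esub> b) \<in> A"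
      using subgroup.m_closed[OF nA.subgroup_axioms a x2] by simp
    have "a \<otimes>\<^bsub>Gb\<^esub> (b \<otimes>\<^bsub>Gb\<^esub> inv\<^bsub>Gb\<^esub> a \<otimes>\<^bsub>Gb\<^esub> inv\<^bsub>Gb\<^esub> b) = a \<otimes>\<^bsub>Gb\<^esub> b \<otimes>\<^bsub>Gb\<^esub> inv\<^bsub>Gb\<^esub> a \<otimes>\<^bsub>Gb\<^esub> inv\<^bsub>Gb\<^esub> b"
      using ac bc by (simp add: m_assoc)
    then have "a \<otimes>\<^bsub>Gb\<^esub> b \<otimes>\<^bsub>Gb\<^esub> inv\<^bsub>Gb\<^esub> a \<otimes>\<^bsub>Gb\<^esub> inv\<^bsub>Gb\<^esub> b = \<one>\<^bsub>Gb\<^esub>" using inA inB AB by auto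
    then have "(a \<otimes>\<^bsub>Gb\<^esub> b \<otimes>\<^bsub>Gb\<^esub> inv\<^bsub>Gb\<^esub> a \<otimes>\<^bsub>Gb\<^esub> inv\<^bsub>Gb\<^esub> b) \<otimes>\<^bsub>Gb\<^esub> b \<otimes>\<^bsub>Gb\<^esub> a = b \<otimes>\<^bsub>Gb\<^esub> a" using ac bc by simp
    then show ?thesis using ac bc by (simp add: m_assoc)
  qed
  show "\<forall>a\<in>A. \<forall>b\<in>B. a \<otimes>\<^bsub>Gb\<^esub> b = b \<otimes>\<^bsub>Gb\<^esub> a" using comm by blast
  have dec: "\<forall>g\<in>G. \<exists>a\<in>A. \<exists>b\<in>B. g = a \<otimes>\<^bsub>Gb\<^esub> b"
    using P unfolding set_mult_def by auto
  show "\<forall>g\<in>G. \<exists>a\<in>A. \<exists>b\<in>B. g = a \<otimes>\<^bsub>Gb\<^esub> b" by (fact dec)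
  show "\<forall>g\<in>G. \<exists>b\<in>B. \<exists>a\<in>A. g = b \<otimes>\<^bsub>Gb\<^esub> a"
  proof
    fix g assume "g \<in> G"
    then obtain a b where ab: "a \<in> A" "b \<in> B" "g = a \<otimes>\<^bsub>Gb\<^esub> b" using dec by blast
    have "g = b \<otimes>\<^bsub>Gb\<^esub> a" using ab comm[OF ab(1,2)] by simp
    then show "\<exists>b\<in>B. \<exists>a\<in>A. g = b \<otimes>\<^bsub>Gb\<^esub> a" using ab by blast
  qed
qed

lemma center_sub:
  assumes "group Gb" "uniquely_divisible Gb" "subgroup G Gb"
    "\<forall>x \<in> carrier Gb. \<exists>n::nat. n > 0 \<and> x [^]\<^bsub>Gb\<^esub> n \<in> G"
  shows "center (Gb\<lparr>carrier := G\<rparr>) \<subseteq> center Gb"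
proof
  interpret group Gb by fact
  fix z assume z: "z \<in> center (Gb\<lparr>carrier := G\<rparr>)"
  then have zG: "z \<in> G" and zc: "\<forall>g\<in>G. z \<otimes>\<^bsub>Gb\<^esub> g = g \<otimes>\<^bsub>Gb\<^esub> z" unfolding center_def by auto
  have zC: "z \<in> carrier Gb" using zG assms(3) subgroup.subset by blast
  have "x \<otimes>\<^bsub>Gb\<^esub> z = z \<otimes>\<^bsub>Gb\<^esub> x" if x: "x \<in> carrier Gb" for x
  proof -
    obtain n::nat where n: "n > 0" "x [^]\<^bsub>Gb\<^esub> n \<in> G" using assms(4) x by blast
    then show ?thesis using root_comm[OF assms(1,2) x zC n(1)] zc by auto
  qed
  then show "z \<in> center Gb" unfolding center_def using zC by auto
qed

lemma one_side:
  assumes gp: "group Gb" and ud: "uniquely_divisible Gb" and sg: "subgroup G Gb"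
    and rt: "\<forall>x \<in> carrier Gb. \<exists>n::nat. n > 0 \<and> x [^]\<^bsub>Gb\<^esub> n \<in> G"
    and sA: "A \<subseteq> G" and sB: "B \<subseteq> G"
    and comm: "\<forall>a\<in>A. \<forall>b\<in>B. a \<otimes>\<^bsub>Gb\<^esub> b = b \<otimes>\<^bsub>Gb\<^esub> a"
    and dec: "\<forall>g\<in>G. \<exists>a\<in>A. \<exists>b\<in>B. g = a \<otimes>\<^bsub>Gb\<^esub> b"
    and m: "rat_closure_set Gb A <#>\<^bsub>Gb\<^esub> center Gb = R <#>\<^bsub>Gb\<^esub> center Gb"
  shows "(R <#>\<^bsub>Gb\<^esub> center Gb) \<inter> G = A <#>\<^bsub>Gb\<^esub> center (Gb\<lparr>carrier := G\<rparr>)"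
proof -
  interpret group Gb by fact
  have G_sub: "G \<subseteq> carrier Gb" using sg subgroup.subset by blast
  have cs: "center (Gb\<lparr>carrier := G\<rparr>) \<subseteq> center Gb" using center_sub[OF gp ud sg rt] .
  show ?thesis
  proof
    show "(R <#>\<^bsub>Gb\<^esub> center Gb) \<inter> G \<subseteq> A <#>\<^bsub>Gb\<^esub> center (Gb\<lparr>carrier := G\<rparr>)"
    proof
      fix g assume g: "g \<in> (R <#>\<^bsub>Gb\<^esub> center Gb) \<inter> G"
      then have gG: "g \<in> G" by simp
      from g m have "g \<in> rat_closure_set Gb A <#>\<^bsub>Gb\<^esub> center Gb" by simp
      then obtain a z where a: "a \<in> rat_closure_set Gb A" and z: "z \<in> center Gb"
        and gaz: "g = a \<otimes>\<^bsub>Gb\<^esub> z"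
        unfolding set_mult_def by auto
      from dec gG obtain g1 g2 where g1: "g1 \<in> A" and g2: "g2 \<in> B" and g12: "g = g1 \<otimes>\<^bsub>Gb\<^esub> g2"
        by blast
      have ac: "a \<in> carrier Gb" using a unfolding rat_closure_set_def by auto
      have zc: "z \<in> carrier Gb" and zcomm: "\<forall>x\<in>carrier Gb. z \<otimes>\<^bsub>Gb\<^esub> x = x \<otimes>\<^bsub>Gb\<^esub> z"
        using z unfolding center_def by auto
      have g1c: "g1 \<in> carrier Gb" and g2c: "g2 \<in> carrier Gb" using g1 g2 sA sB G_sub by auto
      have g2eq: "g2 = inv\<^bsub>Gb\<^esub> g1 \<otimes>\<^bsub>Gb\<^esub> a \<otimes>\<^bsub>Gb\<^esub> z"
      proof -
        have "inv\<^bsub>Gb\<^esub> g1 \<otimes>\<^bsub>Gb\<^esub> g = g2" using g12 g1c g2c by (simp add: m_assoc[symmetric])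
        then show ?thesis using gaz ac zc g1c by (simp add: m_assoc)
      qed
      have g2cent: "g2 \<in> center (Gb\<lparr>carrier := G\<rparr>)"
      proof -
        have "g2 \<otimes>\<^bsub>Gb\<^esub> h = h \<otimes>\<^bsub>Gb\<^esub> g2" if h: "h \<in> G" for h
        proof -
          from dec h obtain h1 h2 where h1: "h1 \<in> A" and h2: "h2 \<in> B" and h12: "h = h1 \<otimes>\<^bsub>Gb\<^esub> h2"
            by blast
          have h1c: "h1 \<in> carrier Gb" and h2c: "h2 \<in> carrier Gb" using h1 h2 sA sB G_sub by auto
          have c1: "h1 \<otimes>\<^bsub>Gb\<^esub> g2 = g2 \<otimes>\<^bsub>Gb\<^esub> h1" using comm h1 g2 by blast
          have cg1: "g1 \<otimes>\<^bsub>Gb\<^esub> h2 = h2 \<otimes>\<^bsub>Gb\<^esub> g1" using comm g1 h2 by blast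
          have cig1: "inv\<^bsub>Gb\<^esub> g1 \<otimes>\<^bsub>Gb\<^esub> h2 = h2 \<otimes>\<^bsub>Gb\<^esub> inv\<^bsub>Gb\<^esub> g1" using comm_inv[OF gp g1c h2c cg1] .
          obtain n::nat where n: "n > 0" "a [^]\<^bsub>Gb\<^esub> n \<in> A" using a unfolding rat_closure_set_def by blast
          have "a [^]\<^bsub>Gb\<^esub> n \<otimes>\<^bsub>Gb\<^esub> h2 = h2 \<otimes>\<^bsub>Gb\<^esub> a [^]\<^bsub>Gb\<^esub> n" using comm n h2 by blast
          then have ca: "a \<otimes>\<^bsub>Gb\<^esub> h2 = h2 \<otimes>\<^bsub>Gb\<^esub> a" using root_comm[OF gp ud ac h2c n(1)] by simp
          have cz: "z \<otimes>\<^bsub>Gb\<^esub> h2 = h2 \<otimes>\<^bsub>Gb\<^esub> z" using zcomm h2c by blast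
          have "(inv\<^bsub>Gb\<^esub> g1 \<otimes>\<^bsub>Gb\<^esub> a) \<otimes>\<^bsub>Gb\<^esub> h2 = h2 \<otimes>\<^bsub>Gb\<^esub> (inv\<^bsub>Gb\<^esub> g1 \<otimes>\<^bsub>Gb\<^esub> a)"
            using comm_mult[OF gp _ ac h2c cig1 ca] g1c by simp
          then have c2: "g2 \<otimes>\<^bsub>Gb\<^esub> h2 = h2 \<otimes>\<^bsub>Gb\<^esub> g2"
            using comm_mult[OF gp _ zc h2c _ cz] g1c ac g2eq by simp
          have "h1 \<otimes>\<^bsub>Gb\<^esub> h2 \<otimes>\<^bsub>Gb\<^esub> g2 = g2 \<otimes>\<^bsub>Gb\<^esub> (h1 \<otimes>\<^bsub>Gb\<^esub> h2)"
            using comm_mult[OF gp h1c h2c g2c c1 c2[symmetric]] .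
          then show ?thesis using h12 by simp
        qed
        then show ?thesis unfolding center_def using g2 sB by auto
      qed
      show "g \<in> A <#>\<^bsub>Gb\<^esub> center (Gb\<lparr>carrier := G\<rparr>)"
        unfolding set_mult_def using g1 g2cent g12 by auto
    qed
  next
    show "A <#>\<^bsub>Gb\<^esub> center (Gb\<lparr>carrier := G\<rparr>) \<subseteq> (R <#>\<^bsub>Gb\<^esub> center Gb) \<inter> G"
    proof
      fix g assume "g \<in> A <#>\<^bsub>Gb\<^esub> center (Gb\<lparr>carrier := G\<rparr>)"
      then obtain a z where a: "a \<in> A" and z: "z \<in> center (Gb\<lparr>carrier := G\<rparr>)"
        and g: "g = a \<otimes>\<^bsub>Gb\<^esub> z" unfolding set_mult_def by auto
      have ac: "a \<in> carrier Gb" using a sA G_sub by auto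
      have "a \<in> rat_closure_set Gb A" unfolding rat_closure_set_def using a ac
        by (intro CollectI conjI exI[of _ "1::nat"]) auto
      moreover have "z \<in> center Gb" using z cs by auto
      ultimately have "g \<in> rat_closure_set Gb A <#>\<^bsub>Gb\<^esub> center Gb"
        unfolding set_mult_def using g by auto
      moreover have "g \<in> G"
      proof -
        have "z \<in> G" using z unfolding center_def by simp
        moreover have "a \<in> G" using a sA by blast
        ultimately show ?thesis using g subgroup.m_closed[OF sg] by simp
      qed
      ultimately show "g \<in> (R <#>\<^bsub>Gb\<^esub> center Gb) \<inter> G" using m by simp
    qed
  qed
qed

theorem mainTheorem11:
  fixes Gb :: "('a, 'b) monoid_scheme" and G G1 G2 R1 R2 :: "'a set"
  assumes fg: "finitely_generated_group (Gb\<lparr>carrier := G\<rparr>)"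
    and nil: "nilpotent_group (Gb\<lparr>carrier := G\<rparr>)"
    and tf: "torsion_free (Gb\<lparr>carrier := G\<rparr>)"
    and rc: "rational_closure_of Gb G"
    and dG: "internal_direct_product (Gb\<lparr>carrier := G\<rparr>) G1 G2"
    and R1: "rational_subgroup R1 Gb" and R2: "rational_subgroup R2 Gb"
    and dR: "internal_direct_product Gb R1 R2"
    and m1: "rat_closure_set Gb G1 <#>\<^bsub>Gb\<^esub> center Gb = R1 <#>\<^bsub>Gb\<^esub> center Gb"
    and m2: "rat_closure_set Gb G2 <#>\<^bsub>Gb\<^esub> center Gb = R2 <#>\<^bsub>Gb\<^esub> center Gb"
  shows "(R1 <#>\<^bsub>Gb\<^esub> center Gb) \<inter> G = G1 <#>\<^bsub>Gb\<^esub> center (Gb\<lparr>carrier := G\<rparr>)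
       \<and> (R2 <#>\<^bsub>Gb\<^esub> center Gb) \<inter> G = G2 <#>\<^bsub>Gb\<^esub> center (Gb\<lparr>carrier := G\<rparr>)"
proof -
  from rc have gp: "group Gb" and ud: "uniquely_divisible Gb" and sg: "subgroup G Gb"
    and rt: "\<forall>x \<in> carrier Gb. \<exists>n::nat. n > 0 \<and> x [^]\<^bsub>Gb\<^esub> n \<in> G"
    unfolding rational_closure_of_def by auto
  note f = dp_facts[OF gp sg dG]
  have "\<forall>a\<in>G2. \<forall>b\<in>G1. a \<otimes>\<^bsub>Gb\<^esub> b = b \<otimes>\<^bsub>Gb\<^esub> a" 
  proof (intro ballI)
    fix a b assume "a \<in> G2" "b \<in> G1"
    then have "b \<otimes>\<^bsub>Gb\<^esub> a = a \<otimes>\<^bsub>Gb\<^esub> b" using f(3) by blast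
    then show "a \<otimes>\<^bsub>Gb\<^esub> b = b \<otimes>\<^bsub>Gb\<^esub> a" by (rule sym)
  qed
  note x = this
  show ?thesis
    using one_side[OF gp ud sg rt f(1,2) f(3,4) m1] one_side[OF gp ud sg rt f(2,1) x f(5) m2]
    by simp
qed

end
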